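(* Let $d\in\mathbb{N}$, $\eta\in(0,1)$, let $(\Omega,\mathcal{F},\mathbb{P})$ be a probability space, let $Y_k\colon\Omega\to\mathbb{R}^d$, $k\in\mathbb{N}_0$, be non-degenerate i.i.d. random variables with $\mathbb{E}[\|Y_0\|]<\infty$, let $Z\colon\Omega\to\mathbb{R}^d$ be a non-degenerate random variable, assume that $(Y_k)_{k\in\mathbb{N}_0}$ and $Z$ are independent, let $A=\{\sum_{k=1}^\infty\eta(1-\eta)^{k-1}\|Y_k\|<\infty\}$, and let $\chi\colon\Omega\to\mathbb{R}^d$ be a random variable with $\chi(\omega)=\sum_{k=1}^\infty\eta(1-\eta)^{k-1}Y_k(\omega)$ for all $\omega\in A$. Then $$\mathbb{P}\big(\|(1-\eta)\chi+\eta Y_0-Z\|>\|\chi-Z\|\big)>0.$$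
   Context: $\|\cdot\|$ is the Euclidean norm. For a Borel measure $\mu$ on $\mathbb{R}^d$, $\operatorname{supp}(\mu)=\{x\in\mathbb{R}^d\colon\mu(B)>0\text{ for every open }B\ni x\}$. For a random variable $X$, $\operatorname{supp}(X)=\operatorname{supp}(\mathbb{P}_X)$ where $\mathbb{P}_X$ is its law. $X$ is called non-degenerate if the interior of $\operatorname{supp}(X)$ is non-empty. *)

theory Defs
  imports "HOL-Probability.Probability"
begin

definition measure_support :: "'a::topological_space measure \<Rightarrow> 'a set" where
  "measure_support \<mu> = {x. \<forall>B. open B \<and> x \<in> B \<longrightarrow> emeasure \<mu> B > 0}"

definition non_degenerate :: "'b measure \<Rightarrow> ('b \<Rightarrow> 'a::topological_space) \<Rightarrow> bool" where
  "non_degenerate M X \<longleftrightarrow> interior (measure_support (distr M borel X)) \<noteq> {}"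

end

theory Submission
  imports Defs
begin

lemma geom1:
  fixes c y z :: "'a::real_inner"
  assumes "0 < e" "inner (z - c) (y - c) < 0"
  shows "norm ((1 - e) *\<^sub>R c + e *\<^sub>R y - z) > norm (c - z)"
proof -
  have eq: "(1 - e) *\<^sub>R c + e *\<^sub>R y - z = (c - z) + e *\<^sub>R (y - c)"
    by (simp add: algebra_simps)
  have "(norm ((c - z) + e *\<^sub>R (y - c)))^2 = (norm (c - z))^2 + 2 * e * inner (c - z) (y - c) + e^2 * (norm (y - c))^2"
    unfolding power2_norm_eq_inner by (simp add: inner_add_left inner_add_right inner_commute algebra_simps power2_eq_square)
  moreover have "inner (c - z) (y - c) > 0"
    using assms(2) by (metis inner_minus_left minus_diff_eq neg_0_less_iff_less)
  ultimately have "(norm ((c - z) + e *\<^sub>R (y - c)))^2 > (norm (c - z))^2"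
  proof -
    assume h: "(norm ((c - z) + e *\<^sub>R (y - c)))^2 = (norm (c - z))^2 + 2 * e * inner (c - z) (y - c) + e^2 * (norm (y - c))^2"
       "inner (c - z) (y - c) > 0"
    have "2 * e * inner (c - z) (y - c) > 0" using h(2) assms(1) by simp
    moreover have "e^2 * (norm (y - c))^2 \<ge> 0" by simp
    ultimately show ?thesis using h(1) by linarith
  qed
  then show ?thesis unfolding eq by (meson norm_ge_zero power_less_imp_less_base)
qed

lemma geom2:
  fixes c y z y0 z0 :: "'a::real_inner"
  assumes D: "norm (y0 - z0) = D" "0 < D" and d: "0 < d"
    and t: "t = d / (2 * D)"
    and ep: "ep = min d D / 16"
    and c: "norm (c - y0) < ep" and y: "norm (y - (y0 + t *\<^sub>R (y0 - z0))) < ep"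
    and z: "norm (z - z0) < ep"
  shows "inner (z - c) (y - c) < 0"
proof -
  define v where "v = y0 - z0"
  define e1 where "e1 = (z - z0) - (c - y0)"
  define e2 where "e2 = (y - (y0 + t *\<^sub>R v)) - (c - y0)"
  have ep0: "0 < ep" using ep d D by simp
  have n1: "norm e1 < 2 * ep" unfolding e1_def using c z norm_triangle_ineq4[of "z - z0" "c - y0"]
    by linarith
  have n2: "norm e2 < 2 * ep" unfolding e2_def using c y[folded v_def] norm_triangle_ineq4[of "y - (y0 + t *\<^sub>R v)" "c - y0"]
    by linarith
  have zc: "z - c = - v + e1" unfolding e1_def v_def by (simp add: algebra_simps)
  have yc: "y - c = t *\<^sub>R v + e2" unfolding e2_def by (simp add: algebra_simps)
  have DD: "D^2 = inner v v" using D(1) v_def power2_norm_eq_inner[of v] by simp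
  have "inner (z - c) (y - c) = - t * D^2 - inner v e2 + t * inner e1 v + inner e1 e2"
    unfolding zc yc DD
    by (simp add: inner_add_left inner_add_right inner_commute power2_norm_eq_inner algebra_simps)
  also have "\<dots> \<le> - t * D^2 + D * (2*ep) + t * ((2*ep) * D) + (2*ep)*(2*ep)"
  proof -
    have "- inner v e2 \<le> D * (2*ep)"
    proof -
      have "norm v * norm e2 \<le> D * (2*ep)" using n2 D v_def by (simp add: mult_left_mono)
      then show ?thesis using Cauchy_Schwarz_ineq2[of v e2] by linarith
    qed
    moreover have "t * inner e1 v \<le> t * ((2*ep) * D)"
    proof -
      have "inner e1 v \<le> norm e1 * norm v" by (rule norm_cauchy_schwarz)
      also have "\<dots> \<le> (2*ep) * D" using n1 D v_def by (simp add: mult_right_mono)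
      finally have "inner e1 v \<le> (2*ep) * D" .
      moreover have "0 \<le> t" using t d D by simp
      ultimately show ?thesis by (rule mult_left_mono)
    qed
    moreover have "inner e1 e2 \<le> (2*ep)*(2*ep)"
    proof -
      have "norm e1 * norm e2 \<le> (2*ep)*(2*ep)" using n1 n2 ep0 by (intro mult_mono) auto
      then show ?thesis using norm_cauchy_schwarz[of e1 e2] by linarith
    qed
    ultimately show ?thesis by linarith
  qed
  also have "\<dots> < 0"
  proof -
    have tD: "t * D^2 = d * D / 2" using t D by (simp add: power2_eq_square field_simps)
    have "ep \<le> d/16" "ep \<le> D/16" using ep by auto
    have a: "D * (2*ep) \<le> d * D / 8" using \<open>ep \<le> d/16\<close> D by (simp add: field_simps)
    have b: "t * ((2*ep) * D) \<le> d * D / 16"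
    proof -
      have "t * ((2*ep) * D) = d * ep" using t D by (simp add: field_simps)
      also have "\<dots> \<le> d * (D/16)" using \<open>ep \<le> D/16\<close> d by (simp add: mult_left_mono)
      finally show ?thesis by simp
    qed
    have cc: "(2*ep)*(2*ep) \<le> (2 * (d/16)) * (2 * (D/16))"
      using \<open>ep \<le> d/16\<close> \<open>ep \<le> D/16\<close> ep0 by (intro mult_mono) auto
    have e: "(2 * (d/16)) * (2 * (D/16)) = d * D / 64" by simp
    have "0 < d * D" using d D by simp
    then show ?thesis using tD a b cc e by linarith
  qed
  finally show ?thesis .
qed


lemma supp_pos:
  assumes "prob_space M" "X \<in> borel_measurable M" "x \<in> measure_support (distr M borel X)" "0 < r"
  shows "measure M (X -` ball x r \<inter> space M) > 0"
proof -
  interpret prob_space M by fact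
  have "emeasure (distr M borel X) (ball x r) > 0"
    using assms(3,4) unfolding measure_support_def by auto
  then have "emeasure M (X -` ball x r \<inter> space M) > 0"
    using assms(2) by (simp add: emeasure_distr)
  then show ?thesis by (simp add: emeasure_eq_measure)
qed

lemma nondeg_ball:
  assumes "non_degenerate M X"
  obtains x r where "0 < r" "ball x r \<subseteq> measure_support (distr M borel X)"
proof -
  obtain x where "x \<in> interior (measure_support (distr M borel X))"
    using assms unfolding non_degenerate_def by auto
  then show ?thesis using that
    by (meson interior_subset open_contains_ball_eq open_interior subset_trans)
qed

lemma nondeg_other:
  fixes X :: "'b \<Rightarrow> 'a::euclidean_space"
  assumes "non_degenerate M X"
  obtains z where "z \<in> measure_support (distr M borel X)" "z \<noteq> y"
proof -
  obtain x r where r: "0 < r" "ball x r \<subseteq> measure_support (distr M borel X)"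
    using nondeg_ball[OF assms] by blast
  obtain b :: 'a where b: "b \<in> Basis" using nonempty_Basis by blast
  define x' where "x' = x + (r/2) *\<^sub>R b"
  have "x \<in> ball x r" "x' \<in> ball x r" using r b by (auto simp: x'_def dist_norm)
  moreover have "x \<noteq> x'" using r b by (auto simp: x'_def)
  ultimately show ?thesis using r that by blast
qed


theorem proposition6p14:
  fixes M :: "'b measure"
    and Y :: "nat \<Rightarrow> 'b \<Rightarrow> 'a::euclidean_space"
    and Z :: "'b \<Rightarrow> 'a"
    and chi :: "'b \<Rightarrow> 'a"
    and \<eta> :: real
  assumes "prob_space M"
    and eta: "0 < \<eta>" "\<eta> < 1"
    and Y_meas: "\<And>k. Y k \<in> borel_measurable M"
    and Y_indep: "prob_space.indep_vars M (\<lambda>_. borel) Y UNIV"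
    and Y_ident: "\<And>k. distr M borel (Y k) = distr M borel (Y 0)"
    and Y_nondeg: "\<And>k. non_degenerate M (Y k)"
    and Y_int: "integrable M (\<lambda>\<omega>. norm (Y 0 \<omega>))"
    and Z_meas: "Z \<in> borel_measurable M"
    and Z_nondeg: "non_degenerate M Z"
    and YZ_indep: "prob_space.indep_vars M (\<lambda>_. borel)
        (\<lambda>i. case i of None \<Rightarrow> Z | Some k \<Rightarrow> Y k) (UNIV :: nat option set)"
    and chi_meas: "chi \<in> borel_measurable M"
    and chi_def: "\<And>\<omega>. \<omega> \<in> space M \<Longrightarrow>
        summable (\<lambda>k. \<eta> * (1 - \<eta>) ^ k * norm (Y (Suc k) \<omega>)) \<Longrightarrow>
        chi \<omega> = (\<Sum>k. (\<eta> * (1 - \<eta>) ^ k) *\<^sub>R Y (Suc k) \<omega>)"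
  shows "measure M {\<omega> \<in> space M.
           norm ((1 - \<eta>) *\<^sub>R chi \<omega> + \<eta> *\<^sub>R Y 0 \<omega> - Z \<omega>) > norm (chi \<omega> - Z \<omega>)} > 0"
proof -
  interpret P: prob_space M by fact
  note [measurable] = Y_meas Z_meas chi_meas
  obtain y0 d where d: "0 < d" "ball y0 d \<subseteq> measure_support (distr M borel (Y 0))"
    using nondeg_ball[OF Y_nondeg[of 0]] by blast
  obtain z0 where z0: "z0 \<in> measure_support (distr M borel Z)" "z0 \<noteq> y0"
    using nondeg_other[OF Z_nondeg] by blast
  define D where "D = norm (y0 - z0)"
  have D: "0 < D" using z0 by (simp add: D_def)
  define t where "t = d / (2*D)"
  define y1 where "y1 = y0 + t *\<^sub>R (y0 - z0)"
  define ep where "ep = min d D / 16"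
  have ep: "0 < ep" using d D by (simp add: ep_def)
  have supk: "\<And>k. measure_support (distr M borel (Y k)) = measure_support (distr M borel (Y 0))"
    by (metis Y_ident)
  have y0s: "y0 \<in> measure_support (distr M borel (Y 0))" using d by auto
  have y1s: "y1 \<in> measure_support (distr M borel (Y 0))"
  proof -
    have "dist y0 y1 = t * D" using d D
      by (simp add: y1_def t_def dist_norm D_def)
    also have "\<dots> = d / 2" using D by (simp add: t_def)
    finally have "y1 \<in> ball y0 d" using d by simp
    then show ?thesis using d by auto
  qed
  define mu where "mu = integral\<^sup>L M (\<lambda>\<omega>. norm (Y 0 \<omega>))"
  have mu0: "0 \<le> mu" unfolding mu_def by simp
  have nnY: "(\<integral>\<^sup>+\<omega>. ennreal (norm (Y j \<omega>)) \<partial>M) = ennreal mu" for j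
  proof -
    have "(\<integral>\<^sup>+\<omega>. ennreal (norm (Y j \<omega>)) \<partial>M) = (\<integral>\<^sup>+x. ennreal (norm x) \<partial>(distr M borel (Y j)))"
      by (simp add: nn_integral_distr)
    also have "\<dots> = (\<integral>\<^sup>+x. ennreal (norm x) \<partial>(distr M borel (Y 0)))" by (simp add: Y_ident[of j])
    also have "\<dots> = (\<integral>\<^sup>+\<omega>. ennreal (norm (Y 0 \<omega>)) \<partial>M)" by (simp add: nn_integral_distr)
    also have "\<dots> = ennreal mu" unfolding mu_def using Y_int by (simp add: nn_integral_eq_integral)
    finally show ?thesis .
  qed
  define M0 where "M0 = mu + 1"
  have M0: "0 < M0" using mu0 by (simp add: M0_def)
  have pos: "0 < norm y0 + M0" using M0 by (simp add: add_nonneg_pos)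
  have "0 < ep / 2 / (norm y0 + M0)" using ep pos by simp
  then obtain n where n: "(1-\<eta>)^n < ep / 2 / (norm y0 + M0)"
    using real_arch_pow_inv[of "ep / 2 / (norm y0 + M0)" "1 - \<eta>"] eta by auto
  then have "(1-\<eta>)^n * (norm y0 + M0) < ep / 2 / (norm y0 + M0) * (norm y0 + M0)"
    using pos by (rule mult_strict_right_mono)
  moreover have "ep / 2 / (norm y0 + M0) * (norm y0 + M0) = ep / 2"
    using pos by (simp add: field_simps)
  ultimately have n': "(1-\<eta>)^n * (norm y0 + M0) < ep / 2"
    by linarith
  define X where "X = (\<lambda>i. case i of None \<Rightarrow> Z | Some k \<Rightarrow> Y k)"
  define F0 where "F0 = insert None (Some ` {..n})"
  define F1 where "F1 = Some ` {n<..}"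
  define g where "g = (\<lambda>f::nat option \<Rightarrow> 'a. \<Sum>k. ennreal (\<eta>*(1-\<eta>)^k * norm (f (Some (Suc (n+k))))))"
  define T where "T = (\<lambda>\<omega>. \<Sum>k. ennreal (\<eta>*(1-\<eta>)^k * norm (Y (Suc (n+k)) \<omega>)))"
  define B where "B = (\<lambda>i. case i of None \<Rightarrow> ball z0 ep | Some (k::nat) \<Rightarrow> (if k = 0 then ball y1 ep else ball y0 (ep/2)))"
  define E0 where "E0 = (\<lambda>\<omega>. restrict (\<lambda>i. X i \<omega>) F0) -` (PiE F0 B) \<inter> space M"
  define E1 where "E1 = (\<lambda>\<omega>. restrict (\<lambda>i. X i \<omega>) F1) -` {f \<in> space (PiM F1 (\<lambda>_. borel)). g f \<le> ennreal M0} \<inter> space M"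
  have indep: "P.indep_vars (\<lambda>_. borel) X UNIV" using YZ_indep unfolding X_def by simp
  have iv: "P.indep_var (PiM F0 (\<lambda>_. borel)) (\<lambda>\<omega>. restrict (\<lambda>i. X i \<omega>) F0) (PiM F1 (\<lambda>_. borel)) (\<lambda>\<omega>. restrict (\<lambda>i. X i \<omega>) F1)"
    by (rule P.indep_var_restrict[OF indep]) (auto simp: F0_def F1_def)
  have F1I: "Some (Suc (n+k)) \<in> F1" for k by (auto simp: F1_def)
  have gmeas: "g \<in> borel_measurable (PiM F1 (\<lambda>_. borel))"
  proof -
    have [measurable]: "(\<lambda>f. f (Some (Suc (n+k)))) \<in> PiM F1 (\<lambda>_. borel) \<rightarrow>\<^sub>M borel" for k
      by (rule measurable_component_singleton[OF F1I])
    show ?thesis unfolding g_def by measurable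
  qed
  have sets0: "PiE F0 B \<in> sets (PiM F0 (\<lambda>_. borel))"
    by (rule sets_PiM_I_finite) (auto simp: F0_def B_def split: option.split nat.split)
  have sets1: "{f \<in> space (PiM F1 (\<lambda>_. borel)). g f \<le> ennreal M0} \<in> sets (PiM F1 (\<lambda>_. borel))"
    using gmeas by measurable
  have prod: "P.prob (E0 \<inter> E1) = P.prob E0 * P.prob E1"
  proof -
    have "E0 \<in> sigma_sets (space M) {(\<lambda>\<omega>. restrict (\<lambda>i. X i \<omega>) F0) -` A \<inter> space M | A. A \<in> sets (PiM F0 (\<lambda>_. borel))}"
      unfolding E0_def using sets0 by (intro sigma_sets.Basic) blast
    moreover have "E1 \<in> sigma_sets (space M) {(\<lambda>\<omega>. restrict (\<lambda>i. X i \<omega>) F1) -` A \<inter> space M | A. A \<in> sets (PiM F1 (\<lambda>_. borel))}"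
      unfolding E1_def using sets1 by (intro sigma_sets.Basic) blast
    ultimately show ?thesis using iv unfolding P.indep_var_eq P.indep_sets2_eq by blast
  qed
  have E0eq: "E0 = (\<Inter>i\<in>F0. X i -` B i \<inter> space M)"
    unfolding E0_def by (auto simp: F0_def PiE_iff)
  have E0p: "P.prob E0 > 0"
  proof -
    have "P.prob E0 = (\<Prod>i\<in>F0. P.prob (X i -` B i \<inter> space M))"
      unfolding E0eq
      by (rule P.indep_setsD[OF indep[unfolded P.indep_vars_def2, THEN conjunct2]])
         (auto simp: F0_def B_def split: option.split nat.split)
    also have "\<dots> > 0"
    proof (rule prod_pos)
      fix i assume "i \<in> F0"
      show "P.prob (X i -` B i \<inter> space M) > 0"
      proof (cases i)
        case None
        then show ?thesis using supp_pos[OF \<open>prob_space M\<close> Z_meas z0(1) ep] by (simp add: X_def B_def)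
      next
        case (Some k)
        show ?thesis
        proof (cases k)
          case 0
          then show ?thesis using Some supp_pos[OF \<open>prob_space M\<close> Y_meas y1s ep] by (simp add: X_def B_def)
        next
          case (Suc k')
          have "y0 \<in> measure_support (distr M borel (Y k))" using supk[of k] y0s by simp
          then show ?thesis using Some Suc supp_pos[OF \<open>prob_space M\<close> Y_meas, of y0 k "ep/2"] ep
            by (simp add: X_def B_def)
        qed
      qed
    qed
    finally show ?thesis .
  qed
  have E1eq: "E1 = {\<omega> \<in> space M. T \<omega> \<le> ennreal M0}"
  proof -
    have "restrict (\<lambda>i. X i \<omega>) F1 \<in> space (PiM F1 (\<lambda>_. borel))" for \<omega> by (simp add: space_PiM)
    moreover have "g (restrict (\<lambda>i. X i \<omega>) F1) = T \<omega>" for \<omega>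
      unfolding g_def T_def using F1I by (simp add: X_def)
    ultimately show ?thesis unfolding E1_def by auto
  qed
  have Tmeas[measurable]: "T \<in> borel_measurable M" unfolding T_def by measurable
  have Tint: "(\<integral>\<^sup>+\<omega>. T \<omega> \<partial>M) = ennreal mu"
  proof -
    have "(\<integral>\<^sup>+\<omega>. T \<omega> \<partial>M) = (\<Sum>k. \<integral>\<^sup>+\<omega>. ennreal (\<eta>*(1-\<eta>)^k * norm (Y (Suc (n+k)) \<omega>)) \<partial>M)"
      unfolding T_def by (rule nn_integral_suminf) measurable
    also have "\<dots> = (\<Sum>k. ennreal (\<eta>*(1-\<eta>)^k * mu))"
    proof (rule suminf_cong)
      fix k
      have "(\<integral>\<^sup>+\<omega>. ennreal (\<eta>*(1-\<eta>)^k * norm (Y (Suc (n+k)) \<omega>)) \<partial>M)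
          = (\<integral>\<^sup>+\<omega>. ennreal (\<eta>*(1-\<eta>)^k) * ennreal (norm (Y (Suc (n+k)) \<omega>)) \<partial>M)"
        using eta by (simp add: ennreal_mult)
      also have "\<dots> = ennreal (\<eta>*(1-\<eta>)^k) * ennreal mu"
        by (subst nn_integral_cmult) (simp_all add: nnY)
      also have "\<dots> = ennreal (\<eta>*(1-\<eta>)^k * mu)" using eta mu0 by (simp add: ennreal_mult)
      finally show "(\<integral>\<^sup>+\<omega>. ennreal (\<eta>*(1-\<eta>)^k * norm (Y (Suc (n+k)) \<omega>)) \<partial>M) = ennreal (\<eta>*(1-\<eta>)^k * mu)" .
    qed
    also have "\<dots> = ennreal (\<Sum>k. \<eta>*(1-\<eta>)^k * mu)"
      using eta mu0 by (intro suminf_ennreal2) (auto intro!: summable_mult summable_mult2)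
    also have "(\<Sum>k. \<eta>*(1-\<eta>)^k * mu) = (\<Sum>k. (1-\<eta>)^k) * (\<eta> * mu)"
    proof -
      have sg: "summable (\<lambda>k. (1-\<eta>)^k)" using eta by simp
      have "(\<lambda>k. \<eta>*(1-\<eta>)^k * mu) = (\<lambda>k. (1-\<eta>)^k * (\<eta> * mu))" by (auto simp: algebra_simps)
      then show ?thesis using suminf_mult2[OF sg, of "\<eta> * mu"] by simp
    qed
    also have "\<dots> = mu" using eta by (simp add: suminf_geometric)
    finally show ?thesis .
  qed
  have E1p: "P.prob E1 > 0"
  proof (rule ccontr)
    assume "\<not> P.prob E1 > 0"
    then have "P.prob E1 = 0" using measure_nonneg[of M E1] by linarith
    moreover have E1ev: "E1 \<in> P.events" unfolding E1eq by measurable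
    ultimately have "E1 \<in> null_sets M" by (simp add: P.emeasure_eq_measure null_sets_def)
    then have "AE \<omega> in M. \<not> T \<omega> \<le> ennreal M0" by (rule AE_I') (auto simp: E1eq)
    then have "AE \<omega> in M. ennreal M0 \<le> T \<omega>" by eventually_elim auto
    then have "(\<integral>\<^sup>+\<omega>. ennreal M0 \<partial>M) \<le> (\<integral>\<^sup>+\<omega>. T \<omega> \<partial>M)" by (rule nn_integral_mono_AE)
    then have "ennreal M0 \<le> ennreal mu" using Tint by (simp add: P.emeasure_space_1)
    then show False using mu0 M0_def by simp
  qed
  define S where "S = {\<omega> \<in> space M. norm ((1 - \<eta>) *\<^sub>R chi \<omega> + \<eta> *\<^sub>R Y 0 \<omega> - Z \<omega>) > norm (chi \<omega> - Z \<omega>)}"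
  have Sev: "S \<in> P.events" unfolding S_def by measurable
  have sub: "E0 \<inter> E1 \<subseteq> S"
  proof
    fix \<omega> assume \<omega>: "\<omega> \<in> E0 \<inter> E1"
    then have sp: "\<omega> \<in> space M" by (simp add: E1eq)
    have inF: "\<omega> \<in> X i -` B i" if "i \<in> F0" for i
      using \<omega> that unfolding E0eq by blast
    have bz: "Z \<omega> \<in> ball z0 ep" using inF[of None] by (simp add: F0_def X_def B_def)
    have by0: "Y 0 \<omega> \<in> ball y1 ep" using inF[of "Some 0"] by (simp add: F0_def X_def B_def)
    have byk: "Y (Suc k) \<omega> \<in> ball y0 (ep/2)" if "k < n" for k
    proof -
      have "Some (Suc k) \<in> F0" using that by (simp add: F0_def)
      then show ?thesis using inF[of "Some (Suc k)"] by (simp add: X_def B_def)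
    qed
    have Tle: "T \<omega> \<le> ennreal M0" using \<omega> by (simp add: E1eq)
    define tl where "tl = (\<lambda>k. \<eta>*(1-\<eta>)^k * norm (Y (Suc (n+k)) \<omega>))"
    have tl0: "0 \<le> tl k" for k using eta by (simp add: tl_def)
    have stl: "summable tl"
      using Tle tl0 by (intro summable_suminf_not_top) (auto simp: T_def tl_def top_unique)
    have tlb: "(\<Sum>k. tl k) \<le> M0"
    proof -
      have "ennreal (\<Sum>k. tl k) = T \<omega>" unfolding T_def tl_def
        using suminf_ennreal2[OF tl0 stl] by (simp add: tl_def)
      then have "ennreal (\<Sum>k. tl k) \<le> ennreal M0" using Tle by simp
      then show ?thesis using M0 by (simp add: ennreal_le_iff)
    qed
    define a where "a = (\<lambda>k. \<eta>*(1-\<eta>)^k * norm (Y (Suc k) \<omega>))"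
    have ash: "a (k+n) = (1-\<eta>)^n * tl k" for k
      by (simp add: a_def tl_def power_add algebra_simps)
    have sash: "summable (\<lambda>k. a (k+n))" unfolding ash using stl by (rule summable_mult)
    then have sa: "summable a" by simp
    define b where "b = (\<lambda>k. (\<eta>*(1-\<eta>)^k) *\<^sub>R Y (Suc k) \<omega>)"
    have nb: "norm (b k) = a k" for k using eta by (simp add: a_def b_def)
    have chi_eq: "chi \<omega> = (\<Sum>k. b k)" using chi_def[OF sp] sa unfolding a_def b_def by simp
    have sb: "summable b" using sa nb by (intro summable_norm_cancel[of b]) simp
    have split: "(\<Sum>k. b k) = (\<Sum>k. b (k+n)) + (\<Sum>k<n. b k)" by (rule suminf_split_initial_segment[OF sb])
    have rest: "norm (\<Sum>k. b (k+n)) \<le> (1-\<eta>)^n * M0"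
    proof -
      have "norm (\<Sum>k. b (k+n)) \<le> (\<Sum>k. norm (b (k+n)))" using sash nb by (intro summable_norm[of "\<lambda>k. b (k+n)"]) simp
      also have "\<dots> = (\<Sum>k. (1-\<eta>)^n * tl k)" by (simp add: nb ash)
      also have "\<dots> = (1-\<eta>)^n * (\<Sum>k. tl k)" using stl by (rule suminf_mult)
      also have "\<dots> \<le> (1-\<eta>)^n * M0" using tlb eta by (simp add: mult_left_mono)
      finally show ?thesis .
    qed
    have gs: "(\<Sum>k<n. \<eta>*(1-\<eta>)^k) = 1 - (1-\<eta>)^n"
      using eta by (simp add: sum_distrib_left[symmetric] sum_gp_strict)
    have fin: "(\<Sum>k<n. b k) - y0 = (\<Sum>k<n. (\<eta>*(1-\<eta>)^k) *\<^sub>R (Y (Suc k) \<omega> - y0)) - (1-\<eta>)^n *\<^sub>R y0"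
    proof -
      have "(\<Sum>k<n. (\<eta>*(1-\<eta>)^k) *\<^sub>R (Y (Suc k) \<omega> - y0)) = (\<Sum>k<n. b k) - (\<Sum>k<n. \<eta>*(1-\<eta>)^k) *\<^sub>R y0"
        by (simp add: b_def scaleR_diff_right sum_subtractf scaleR_sum_left)
      then show ?thesis unfolding gs by (simp add: algebra_simps)
    qed
    have finb: "norm (\<Sum>k<n. (\<eta>*(1-\<eta>)^k) *\<^sub>R (Y (Suc k) \<omega> - y0)) \<le> ep/2"
    proof -
      have "norm (\<Sum>k<n. (\<eta>*(1-\<eta>)^k) *\<^sub>R (Y (Suc k) \<omega> - y0)) \<le> (\<Sum>k<n. norm ((\<eta>*(1-\<eta>)^k) *\<^sub>R (Y (Suc k) \<omega> - y0)))"
        by (rule norm_sum)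
      also have "\<dots> \<le> (\<Sum>k<n. \<eta>*(1-\<eta>)^k * (ep/2))"
      proof (rule sum_mono)
        fix k assume "k \<in> {..<n}"
        then have "Y (Suc k) \<omega> \<in> ball y0 (ep/2)" using byk by simp
        then have "norm (Y (Suc k) \<omega> - y0) < ep/2" by (simp add: dist_norm norm_minus_commute)
        then have "norm (Y (Suc k) \<omega> - y0) \<le> ep/2" by simp
        then show "norm ((\<eta>*(1-\<eta>)^k) *\<^sub>R (Y (Suc k) \<omega> - y0)) \<le> \<eta>*(1-\<eta>)^k * (ep/2)"
          using eta by (simp add: mult_left_mono)
      qed
      also have "\<dots> = (1 - (1-\<eta>)^n) * (ep/2)" by (simp only: sum_distrib_right[symmetric] gs)
      also have "\<dots> \<le> ep/2" using eta ep by (simp add: mult_le_cancel_right1)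
      finally show ?thesis .
    qed
    have cy: "norm (chi \<omega> - y0) < ep"
    proof -
      have "chi \<omega> - y0 = (\<Sum>k. b (k+n)) + ((\<Sum>k<n. (\<eta>*(1-\<eta>)^k) *\<^sub>R (Y (Suc k) \<omega> - y0)) - (1-\<eta>)^n *\<^sub>R y0)"
        unfolding chi_eq split fin[symmetric] by simp
      then have "norm (chi \<omega> - y0) = norm ((\<Sum>k. b (k+n)) + ((\<Sum>k<n. (\<eta>*(1-\<eta>)^k) *\<^sub>R (Y (Suc k) \<omega> - y0)) - (1-\<eta>)^n *\<^sub>R y0))"
        by simp
      then have "norm (chi \<omega> - y0) \<le> norm (\<Sum>k. b (k+n)) + (norm (\<Sum>k<n. (\<eta>*(1-\<eta>)^k) *\<^sub>R (Y (Suc k) \<omega> - y0)) + norm ((1-\<eta>)^n *\<^sub>R y0))"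
        using norm_triangle_ineq[of "\<Sum>k. b (k+n)" "(\<Sum>k<n. (\<eta>*(1-\<eta>)^k) *\<^sub>R (Y (Suc k) \<omega> - y0)) - (1-\<eta>)^n *\<^sub>R y0"]
          norm_triangle_ineq4[of "\<Sum>k<n. (\<eta>*(1-\<eta>)^k) *\<^sub>R (Y (Suc k) \<omega> - y0)" "(1-\<eta>)^n *\<^sub>R y0"]
        by linarith
      moreover have "norm ((1-\<eta>)^n *\<^sub>R y0) = (1-\<eta>)^n * norm y0" using eta by simp
      ultimately have "norm (chi \<omega> - y0) \<le> (1-\<eta>)^n * M0 + (ep/2 + (1-\<eta>)^n * norm y0)"
        using rest finb by linarith
      moreover have "(1-\<eta>)^n*(norm y0+M0) = (1-\<eta>)^n*norm y0 + (1-\<eta>)^n*M0" by (simp add: distrib_left)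
      ultimately show ?thesis using n' by linarith
    qed
    have "inner (Z \<omega> - chi \<omega>) (Y 0 \<omega> - chi \<omega>) < 0"
      by (rule geom2[OF D_def[symmetric] D d(1) t_def ep_def cy])
         (use by0 bz in \<open>auto simp: y1_def dist_norm norm_minus_commute\<close>)
    then show "\<omega> \<in> S" using geom1[OF eta(1)] sp by (simp add: S_def)
  qed
  have "P.prob S \<ge> P.prob (E0 \<inter> E1)" using sub Sev by (rule P.finite_measure_mono)
  moreover have "P.prob (E0 \<inter> E1) > 0" using prod E0p E1p by simp
  ultimately show ?thesis unfolding S_def by simp
qed

end
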